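(* Let $M\ge 2$ and $d\ge 2$ be integers, and let $\{p(a,b,c|x,y,z)\}$ be any tripartite nonsignalling probability distribution in which each of the three parties $A,B,C$ chooses one of $M$ measurements, $A_x,B_y,C_z$ with $x,y,z\in\{1,\dots,M\}$, each having $d$ outcomes labelled by $\{0,1,\dots,d-1\}$ (identified with $\mathbb{Z}_d$). Then for every pair $i,j\in\{1,\dots,M\}$ and for $X$ denoting either $A$ or $B$, $$I^{2,M,d}_{AB}+\langle[X_i-C_j]\rangle+\langle[C_j-X_i]\rangle\ \ge\ d-1,$$ where $$I^{2,M,d}_{AB}=\sum_{\alpha=1}^{M}\Big(\langle[A_\alpha-B_\alpha]\rangle+\langle[B_\alpha-A_{\alpha+1}]\rangle\Big),$$ with the convention that $A_{M+1}$ denotes the variable $[A_1+1]$ (so the term $\langle[B_M-A_{M+1}]\rangle$ equals $\langle[B_M-A_1-1]\rangle$).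
   Context: For a random variable $\Omega$ built as an integer linear combination of outcomes, $[\Omega]$ denotes $\Omega$ modulo $d$, and $\langle[\Omega]\rangle=\sum_{i=0}^{d-1} i\,P([\Omega]=i)$. Each such expectation is computed from the (well-defined, by no-signalling) marginal joint distribution of the two measurements involved; e.g. $\langle[A_\alpha-B_\alpha]\rangle$ uses $p(a,b|x=\alpha,y=\alpha)$ and $\langle[X_i-C_j]\rangle$ uses the marginal distribution of the outcomes of $X_i$ and $C_j$. Nonsignalling means that the marginal distribution of any subset of parties does not depend on the measurement choices of the remaining parties. *)

theory Defs
  imports Complex_Main
begin

text \<open>A tripartite behaviour: p a b c x y z = p(a,b,c|x,y,z), with outcomes
 a,b,c in {0..<d} (representing Z_d) and settings x,y,z in {1..M}.\<close>

type_synonym behaviour = "nat \<Rightarrow> nat \<Rightarrow> nat \<Rightarrow> nat \<Rightarrow> nat \<Rightarrow> nat \<Rightarrow> real"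

definition prob_dist :: "nat \<Rightarrow> nat \<Rightarrow> behaviour \<Rightarrow> bool" where
  "prob_dist M d p \<longleftrightarrow>
     (\<forall>x\<in>{1..M}. \<forall>y\<in>{1..M}. \<forall>z\<in>{1..M}.
        (\<forall>a<d. \<forall>b<d. \<forall>c<d. p a b c x y z \<ge> 0) \<and>
        (\<Sum>a<d. \<Sum>b<d. \<Sum>c<d. p a b c x y z) = 1)"

text \<open>Nonsignalling: the marginal of any subset of parties is independent of the
 settings of the remaining parties (the two-party conditions imply the one-party ones).\<close>
definition nonsignalling :: "nat \<Rightarrow> nat \<Rightarrow> behaviour \<Rightarrow> bool" where
  "nonsignalling M d p \<longleftrightarrow>
     (\<forall>x\<in>{1..M}. \<forall>y\<in>{1..M}. \<forall>z\<in>{1..M}. \<forall>z'\<in>{1..M}. \<forall>a<d. \<forall>b<d.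
        (\<Sum>c<d. p a b c x y z) = (\<Sum>c<d. p a b c x y z')) \<and>
     (\<forall>x\<in>{1..M}. \<forall>y\<in>{1..M}. \<forall>y'\<in>{1..M}. \<forall>z\<in>{1..M}. \<forall>a<d. \<forall>c<d.
        (\<Sum>b<d. p a b c x y z) = (\<Sum>b<d. p a b c x y' z)) \<and>
     (\<forall>x\<in>{1..M}. \<forall>x'\<in>{1..M}. \<forall>y\<in>{1..M}. \<forall>z\<in>{1..M}. \<forall>b<d. \<forall>c<d.
        (\<Sum>a<d. p a b c x y z) = (\<Sum>a<d. p a b c x' y z))"

text \<open>Two-party marginals (well defined by nonsignalling; we fix the remaining
 party's setting to 1).\<close>
definition margAB :: "nat \<Rightarrow> behaviour \<Rightarrow> nat \<Rightarrow> nat \<Rightarrow> nat \<Rightarrow> nat \<Rightarrow> real" where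
  "margAB d p x y a b = (\<Sum>c<d. p a b c x y 1)"
definition margAC :: "nat \<Rightarrow> behaviour \<Rightarrow> nat \<Rightarrow> nat \<Rightarrow> nat \<Rightarrow> nat \<Rightarrow> real" where
  "margAC d p x z a c = (\<Sum>b<d. p a b c x 1 z)"
definition margBC :: "nat \<Rightarrow> behaviour \<Rightarrow> nat \<Rightarrow> nat \<Rightarrow> nat \<Rightarrow> nat \<Rightarrow> real" where
  "margBC d p y z b c = (\<Sum>a<d. p a b c 1 y z)"

text \<open>Expectation of [f(u,v)] = f(u,v) mod d under a two-outcome joint distribution q:
 sum_{i=0}^{d-1} i P([f]=i) = sum_{u,v} q(u,v) ((f u v) mod d).\<close>
definition expmod :: "nat \<Rightarrow> (nat \<Rightarrow> nat \<Rightarrow> real) \<Rightarrow> (int \<Rightarrow> int \<Rightarrow> int) \<Rightarrow> real" where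
  "expmod d q f = (\<Sum>u<d. \<Sum>v<d. q u v * real_of_int (f (int u) (int v) mod int d))"

definition I_AB :: "nat \<Rightarrow> nat \<Rightarrow> behaviour \<Rightarrow> real" where
  "I_AB M d p = (\<Sum>\<alpha>=1..M.
      expmod d (margAB d p \<alpha> \<alpha>) (\<lambda>a b. a - b) +
      (if \<alpha> < M then expmod d (margAB d p (\<alpha>+1) \<alpha>) (\<lambda>a b. b - a)
       else expmod d (margAB d p 1 M) (\<lambda>a b. b - a - 1)))"

end

theory Submission
  imports Defs
begin


definition E3 :: "nat \<Rightarrow> behaviour \<Rightarrow> nat \<Rightarrow> nat \<Rightarrow> nat \<Rightarrow> (nat\<Rightarrow>nat\<Rightarrow>nat\<Rightarrow>real) \<Rightarrow> real" where
 "E3 d p x y z F = (\<Sum>a<d. \<Sum>b<d. \<Sum>c<d. p a b c x y z * F a b c)"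

lemma E3_mono:
  assumes "prob_dist M d p" "x \<in> {1..M}" "y \<in> {1..M}" "z \<in> {1..M}"
    and "\<And>a b c. a < d \<Longrightarrow> b < d \<Longrightarrow> c < d \<Longrightarrow> F a b c \<le> G a b c"
  shows "E3 d p x y z F \<le> E3 d p x y z G"
  unfolding E3_def
proof (intro sum_mono)
  fix a b c assume "a \<in> {..<d}" "b \<in> {..<d}" "c \<in> {..<d}"
  then have "p a b c x y z \<ge> 0" using assms(1-4) unfolding prob_dist_def by auto
  then show "p a b c x y z * F a b c \<le> p a b c x y z * G a b c"
    using assms(5) \<open>a \<in> {..<d}\<close> \<open>b \<in> {..<d}\<close> \<open>c \<in> {..<d}\<close> by (simp add: mult_left_mono)
qed

lemma E3_diff: "E3 d p x y z (\<lambda>a b c. F a b c - G a b c) = E3 d p x y z F - E3 d p x y z G"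
  unfolding E3_def by (simp add: right_diff_distrib sum_subtractf)

lemma E3_add: "E3 d p x y z (\<lambda>a b c. F a b c + G a b c) = E3 d p x y z F + E3 d p x y z G"
  unfolding E3_def by (simp add: distrib_left sum.distrib)

lemma E3_const:
  assumes "prob_dist M d p" "x \<in> {1..M}" "y \<in> {1..M}" "z \<in> {1..M}"
  shows "E3 d p x y z (\<lambda>a b c. k) = k"
proof -
  have "(\<Sum>a<d. \<Sum>b<d. \<Sum>c<d. p a b c x y z) = 1" using assms unfolding prob_dist_def by auto
  then show ?thesis unfolding E3_def by (simp add: sum_distrib_right[symmetric])
qed

lemma E3_AB:
  assumes "nonsignalling M d p" "x \<in> {1..M}" "y \<in> {1..M}" "z \<in> {1..M}" "M \<ge> 1"
  shows "expmod d (margAB d p x y) f = E3 d p x y z (\<lambda>a b c. real_of_int (f (int a) (int b) mod int d))"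
proof -
  have one: "1 \<in> {1..M}" using assms(5) by simp
  have ns: "\<forall>x\<in>{1..M}. \<forall>y\<in>{1..M}. \<forall>z\<in>{1..M}. \<forall>z'\<in>{1..M}. \<forall>a<d. \<forall>b<d.
        (\<Sum>c<d. p a b c x y z) = (\<Sum>c<d. p a b c x y z')" using assms(1) unfolding nonsignalling_def by (rule conjunct1)
  have "\<And>a b. a < d \<Longrightarrow> b < d \<Longrightarrow> margAB d p x y a b = (\<Sum>c<d. p a b c x y z)"
    unfolding margAB_def using ns[rule_format, OF assms(2,3) one assms(4)] by blast
  then show ?thesis unfolding expmod_def E3_def by (simp add: sum_distrib_right)
qed

lemma E3_AC:
  assumes "nonsignalling M d p" "x \<in> {1..M}" "y \<in> {1..M}" "z \<in> {1..M}" "M \<ge> 1"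
  shows "expmod d (margAC d p x z) g = E3 d p x y z (\<lambda>a b c. real_of_int (g (int a) (int c) mod int d))"
proof -
  have one: "1 \<in> {1..M}" using assms(5) by simp
  have ns: "\<forall>x\<in>{1..M}. \<forall>y\<in>{1..M}. \<forall>y'\<in>{1..M}. \<forall>z\<in>{1..M}. \<forall>a<d. \<forall>c<d.
        (\<Sum>b<d. p a b c x y z) = (\<Sum>b<d. p a b c x y' z)" using assms(1) unfolding nonsignalling_def by blast
  have "\<And>a c. a < d \<Longrightarrow> c < d \<Longrightarrow> margAC d p x z a c = (\<Sum>b<d. p a b c x y z)"
    unfolding margAC_def using ns[rule_format, OF assms(2) one assms(3,4)] by blast
  then have "expmod d (margAC d p x z) g = (\<Sum>a<d. \<Sum>c<d. \<Sum>b<d. p a b c x y z * real_of_int (g (int a) (int c) mod int d))"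
    unfolding expmod_def by (simp add: sum_distrib_right)
  also have "\<dots> = E3 d p x y z (\<lambda>a b c. real_of_int (g (int a) (int c) mod int d))"
    unfolding E3_def by (rule sum.cong[OF refl], rule sum.swap)
  finally show ?thesis .
qed

lemma E3_BC:
  assumes "nonsignalling M d p" "x \<in> {1..M}" "y \<in> {1..M}" "z \<in> {1..M}" "M \<ge> 1"
  shows "expmod d (margBC d p y z) g = E3 d p x y z (\<lambda>a b c. real_of_int (g (int b) (int c) mod int d))"
proof -
  have one: "1 \<in> {1..M}" using assms(5) by simp
  have ns: "\<forall>x\<in>{1..M}. \<forall>x'\<in>{1..M}. \<forall>y\<in>{1..M}. \<forall>z\<in>{1..M}. \<forall>b<d. \<forall>c<d.
        (\<Sum>a<d. p a b c x y z) = (\<Sum>a<d. p a b c x' y z)" using assms(1) unfolding nonsignalling_def by blast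
  have "\<And>b c. b < d \<Longrightarrow> c < d \<Longrightarrow> margBC d p y z b c = (\<Sum>a<d. p a b c x y z)"
    unfolding margBC_def using ns[rule_format, OF one assms(2,3,4)] by blast
  then have "expmod d (margBC d p y z) g = (\<Sum>b<d. \<Sum>c<d. \<Sum>a<d. p a b c x y z * real_of_int (g (int b) (int c) mod int d))"
    unfolding expmod_def by (simp add: sum_distrib_right)
  also have "\<dots> = (\<Sum>b<d. \<Sum>a<d. \<Sum>c<d. p a b c x y z * real_of_int (g (int b) (int c) mod int d))"
    by (rule sum.cong[OF refl], rule sum.swap)
  also have "\<dots> = E3 d p x y z (\<lambda>a b c. real_of_int (g (int b) (int c) mod int d))"
    unfolding E3_def by (rule sum.swap)
  finally show ?thesis .
qed



lemma mod_tri: fixes u v d :: int assumes "d > 0" shows "(u+v) mod d \<le> u mod d + v mod d"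
proof -
  have "(u+v) mod d = (u mod d + v mod d) mod d" by (simp add: mod_add_eq)
  also have "\<dots> \<le> u mod d + v mod d" by (rule zmod_le_nonneg_dividend) (simp add: assms)
  finally show ?thesis .
qed

lemma mod_pair: fixes u d :: int assumes "d > 0" shows "(u - 1) mod d + (- u) mod d = d - 1"
  using assms minus_mod_int_eq by auto

lemma mod_tri_r: fixes u v w d :: int assumes "d > 0" "w = u + v"
  shows "real_of_int (w mod d) - real_of_int (v mod d) \<le> real_of_int (u mod d)"
proof -
  have "w mod d \<le> u mod d + v mod d" using mod_tri[OF assms(1)] assms(2) by simp
  then have "real_of_int (w mod d) \<le> real_of_int (u mod d + v mod d)" by (simp only: of_int_le_iff)
  then show ?thesis by simp
qed

lemma mod_pair_r: fixes v w :: int and d :: nat assumes "d > 0" "v + w = - 1"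
  shows "real_of_int (v mod int d) + real_of_int (w mod int d) = real d - 1"
proof -
  have w: "w = - (v + 1)" using assms(2) by simp
  have "v mod int d + w mod int d = int d - 1" using mod_pair[of "int d" "v + 1"] assms(1) unfolding w by simp
  then have "real_of_int (v mod int d + w mod int d) = real_of_int (int d - 1)" by simp
  then show ?thesis by simp
qed

lemma bound_gen:
  assumes pd: "prob_dist M d p" and ns: "nonsignalling M d p" and M: "M \<ge> 1" and d: "d \<ge> 1"
    and x: "x \<in> {1..M}" and y: "y \<in> {1..M}" and j: "j \<in> {1..M}"
  shows "expmod d (margAB d p x y) (\<lambda>a b. a - b) \<ge> expmod d (margAC d p x j) (\<lambda>a c. a - c - s) - expmod d (margBC d p y j) (\<lambda>b c. b - c - s)"
    and "expmod d (margAB d p x y) (\<lambda>a b. b - a) \<ge> expmod d (margBC d p y j) (\<lambda>b c. b - c - s) - expmod d (margAC d p x j) (\<lambda>a c. a - c - s)"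
    and "expmod d (margAB d p x y) (\<lambda>a b. b - a - 1) \<ge> expmod d (margBC d p y j) (\<lambda>b c. b - c - 1) - expmod d (margAC d p x j) (\<lambda>a c. a - c)"
proof -
  note AB = E3_AB[OF ns x y j M] and AC = E3_AC[OF ns x y j M] and BC = E3_BC[OF ns x y j M]
  have dp: "int d > 0" using d by simp
  show "expmod d (margAB d p x y) (\<lambda>a b. a - b) \<ge> expmod d (margAC d p x j) (\<lambda>a c. a - c - s) - expmod d (margBC d p y j) (\<lambda>b c. b - c - s)"
    unfolding AB AC BC E3_diff[symmetric]
    by (rule E3_mono[OF pd x y j]) (rule mod_tri_r[OF dp], simp)
  show "expmod d (margAB d p x y) (\<lambda>a b. b - a) \<ge> expmod d (margBC d p y j) (\<lambda>b c. b - c - s) - expmod d (margAC d p x j) (\<lambda>a c. a - c - s)"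
    unfolding AB AC BC E3_diff[symmetric]
    by (rule E3_mono[OF pd x y j]) (rule mod_tri_r[OF dp], simp)
  show "expmod d (margAB d p x y) (\<lambda>a b. b - a - 1) \<ge> expmod d (margBC d p y j) (\<lambda>b c. b - c - 1) - expmod d (margAC d p x j) (\<lambda>a c. a - c)"
    unfolding AB AC BC E3_diff[symmetric]
    by (rule E3_mono[OF pd x y j]) (rule mod_tri_r[OF dp], simp)
qed

lemma final_AC:
  assumes pd: "prob_dist M d p" and ns: "nonsignalling M d p" and M: "M \<ge> 1" and d: "d \<ge> 1"
    and x: "x \<in> {1..M}" and j: "j \<in> {1..M}"
  shows "expmod d (margAC d p x j) (\<lambda>a c. a - c - 1) + expmod d (margAC d p x j) (\<lambda>a c. c - a) = real d - 1"
proof -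
  have one: "1 \<in> {1..M}" using M by simp
  note AC = E3_AC[OF ns x one j M]
  have dp: "int d > 0" using d by simp
  have "expmod d (margAC d p x j) (\<lambda>a c. a - c - 1) + expmod d (margAC d p x j) (\<lambda>a c. c - a)
     = E3 d p x 1 j (\<lambda>a b c. real d - 1)"
    unfolding AC E3_add[symmetric]
    by (rule arg_cong[where f="E3 d p x 1 j"], intro ext)
      (rule mod_pair_r, use d in simp, simp)
  also have "\<dots> = real d - 1" by (rule E3_const[OF pd x one j])
  finally show ?thesis .
qed

lemma final_BC:
  assumes pd: "prob_dist M d p" and ns: "nonsignalling M d p" and M: "M \<ge> 1" and d: "d \<ge> 1"
    and y: "y \<in> {1..M}" and j: "j \<in> {1..M}"
  shows "expmod d (margBC d p y j) (\<lambda>b c. b - c - 1) + expmod d (margBC d p y j) (\<lambda>b c. c - b) = real d - 1"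
proof -
  have one: "1 \<in> {1..M}" using M by simp
  note BC = E3_BC[OF ns one y j M]
  have dp: "int d > 0" using d by simp
  have "expmod d (margBC d p y j) (\<lambda>b c. b - c - 1) + expmod d (margBC d p y j) (\<lambda>b c. c - b)
     = E3 d p 1 y j (\<lambda>a b c. real d - 1)"
    unfolding BC E3_add[symmetric]
    by (rule arg_cong[where f="E3 d p 1 y j"], intro ext)
      (rule mod_pair_r, use d in simp, simp)
  also have "\<dots> = real d - 1" by (rule E3_const[OF pd one y j])
  finally show ?thesis .
qed



lemma telesA:
  fixes ea eb pa qa pb qb :: "nat \<Rightarrow> real" and M i :: nat
  assumes i1: "1 \<le> i" and iM: "i \<le> M"
    and h1: "\<forall>\<alpha>\<in>{1..M}. ea \<alpha> \<ge> (if i \<le> \<alpha> then qa \<alpha> - qb \<alpha> else pa \<alpha> - pb \<alpha>)"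
    and h2: "\<forall>\<alpha>\<in>{1..<M}. eb \<alpha> \<ge> (if i \<le> \<alpha> then qb \<alpha> - qa (Suc \<alpha>) else pb \<alpha> - pa (Suc \<alpha>))"
    and h3: "eb M \<ge> qb M - pa 1"
  shows "(\<Sum>\<alpha>=1..M. ea \<alpha> + eb \<alpha>) \<ge> qa i - pa i"
proof -
  define g where "g \<alpha> = (if i \<le> \<alpha> then qa \<alpha> else pa \<alpha>)" for \<alpha>
  have lb: "ea \<alpha> + eb \<alpha> \<ge> (g \<alpha> - g (Suc \<alpha>)) + (if \<alpha> = i - 1 then qa i - pa i else 0)"
    if "\<alpha> \<in> {1..<M}" for \<alpha>
  proof -
    have "\<alpha> \<in> {1..M}" using that by auto
    then have ea: "ea \<alpha> \<ge> (if i \<le> \<alpha> then qa \<alpha> - qb \<alpha> else pa \<alpha> - pb \<alpha>)" using h1 by blast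
    have eb: "eb \<alpha> \<ge> (if i \<le> \<alpha> then qb \<alpha> - qa (Suc \<alpha>) else pb \<alpha> - pa (Suc \<alpha>))" using h2 that by blast
    show ?thesis using ea eb that i1 unfolding g_def by (auto split: if_splits)
  qed
  have M1: "1 \<le> M" using i1 iM by simp
  have "(\<Sum>\<alpha>=1..M. ea \<alpha> + eb \<alpha>) = (\<Sum>\<alpha>=1..<M. ea \<alpha> + eb \<alpha>) + (ea M + eb M)"
    using M1 by (simp add: sum.atLeastLessThan_Suc flip: atLeastLessThanSuc_atLeastAtMost)
  also have "(\<Sum>\<alpha>=1..<M. ea \<alpha> + eb \<alpha>) \<ge> (\<Sum>\<alpha>=1..<M. (g \<alpha> - g (Suc \<alpha>)) + (if \<alpha> = i - 1 then qa i - pa i else 0))"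
    by (rule sum_mono) (rule lb)
  moreover have "(\<Sum>\<alpha>=1..<M. (g \<alpha> - g (Suc \<alpha>)) + (if \<alpha> = i - 1 then qa i - pa i else 0))
      = - (g M - g 1) + (if i - 1 \<in> {1..<M} then qa i - pa i else 0)"
  proof -
    have tel: "(\<Sum>\<alpha>=1..<M. g \<alpha> - g (Suc \<alpha>)) = g 1 - g M"
    proof -
      have t0: "(\<Sum>\<alpha>=1..<M. g (Suc \<alpha>) - g \<alpha>) = g M - g 1" by (rule sum_Suc_diff'[OF M1])
      have "(\<Sum>\<alpha>=1..<M. g \<alpha> - g (Suc \<alpha>)) = (\<Sum>\<alpha>=1..<M. -(g (Suc \<alpha>) - g \<alpha>))" by simp
      also have "\<dots> = -(\<Sum>\<alpha>=1..<M. g (Suc \<alpha>) - g \<alpha>)" by (rule sum_negf)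
      finally show ?thesis using t0 by simp
    qed
    show ?thesis by (simp only: sum.distrib tel) (simp add: sum.delta)
  qed
  moreover have "ea M + eb M \<ge> qa M - pa 1" using h1 h3 iM M1 by force
  ultimately show ?thesis using i1 iM unfolding g_def by (auto split: if_splits)
qed

lemma telesB:
  fixes ea eb pa qa pb qb :: "nat \<Rightarrow> real" and M i :: nat
  assumes i1: "1 \<le> i" and iM: "i \<le> M"
    and h1: "\<forall>\<alpha>\<in>{1..M}. ea \<alpha> \<ge> (if i < \<alpha> then qa \<alpha> - qb \<alpha> else pa \<alpha> - pb \<alpha>)"
    and h2: "\<forall>\<alpha>\<in>{1..<M}. eb \<alpha> \<ge> (if i \<le> \<alpha> then qb \<alpha> - qa (Suc \<alpha>) else pb \<alpha> - pa (Suc \<alpha>))"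
    and h3: "eb M \<ge> qb M - pa 1"
  shows "(\<Sum>\<alpha>=1..M. ea \<alpha> + eb \<alpha>) \<ge> qb i - pb i"
proof -
  define g where "g \<alpha> = (if i < \<alpha> then qa \<alpha> else pa \<alpha>)" for \<alpha>
  have lb: "ea \<alpha> + eb \<alpha> \<ge> (g \<alpha> - g (Suc \<alpha>)) + (if \<alpha> = i then qb i - pb i else 0)"
    if "\<alpha> \<in> {1..<M}" for \<alpha>
  proof -
    have "\<alpha> \<in> {1..M}" using that by auto
    then have ea: "ea \<alpha> \<ge> (if i < \<alpha> then qa \<alpha> - qb \<alpha> else pa \<alpha> - pb \<alpha>)" using h1 by blast
    have eb: "eb \<alpha> \<ge> (if i \<le> \<alpha> then qb \<alpha> - qa (Suc \<alpha>) else pb \<alpha> - pa (Suc \<alpha>))" using h2 that by blast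
    show ?thesis using ea eb that i1 unfolding g_def by (auto split: if_splits)
  qed
  have M1: "1 \<le> M" using i1 iM by simp
  have "(\<Sum>\<alpha>=1..M. ea \<alpha> + eb \<alpha>) = (\<Sum>\<alpha>=1..<M. ea \<alpha> + eb \<alpha>) + (ea M + eb M)"
    using M1 by (simp add: sum.atLeastLessThan_Suc flip: atLeastLessThanSuc_atLeastAtMost)
  also have "(\<Sum>\<alpha>=1..<M. ea \<alpha> + eb \<alpha>) \<ge> (\<Sum>\<alpha>=1..<M. (g \<alpha> - g (Suc \<alpha>)) + (if \<alpha> = i then qb i - pb i else 0))"
    by (rule sum_mono) (rule lb)
  moreover have "(\<Sum>\<alpha>=1..<M. (g \<alpha> - g (Suc \<alpha>)) + (if \<alpha> = i then qb i - pb i else 0))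
      = - (g M - g 1) + (if i \<in> {1..<M} then qb i - pb i else 0)"
  proof -
    have tel: "(\<Sum>\<alpha>=1..<M. g \<alpha> - g (Suc \<alpha>)) = g 1 - g M"
    proof -
      have t0: "(\<Sum>\<alpha>=1..<M. g (Suc \<alpha>) - g \<alpha>) = g M - g 1" by (rule sum_Suc_diff'[OF M1])
      have "(\<Sum>\<alpha>=1..<M. g \<alpha> - g (Suc \<alpha>)) = (\<Sum>\<alpha>=1..<M. -(g (Suc \<alpha>) - g \<alpha>))" by simp
      also have "\<dots> = -(\<Sum>\<alpha>=1..<M. g (Suc \<alpha>) - g \<alpha>)" by (rule sum_negf)
      finally show ?thesis using t0 by simp
    qed
    show ?thesis by (simp only: sum.distrib tel) (simp add: sum.delta)
  qed
  moreover have "ea M + eb M \<ge> (if i < M then qa M - qb M else pa M - pb M) + qb M - pa 1"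
  proof -
    have "M \<in> {1..M}" using M1 by simp
    then have "ea M \<ge> (if i < M then qa M - qb M else pa M - pb M)" using h1 by blast
    then show ?thesis using h3 by linarith
  qed
  ultimately show ?thesis using i1 iM unfolding g_def by (auto split: if_splits)
qed


theorem theorem1:
  fixes M d :: nat and p :: behaviour
  assumes "M \<ge> 2" and "d \<ge> 2"
    and "prob_dist M d p" and "nonsignalling M d p"
    and "i \<in> {1..M}" and "j \<in> {1..M}"
  shows "I_AB M d p + expmod d (margAC d p i j) (\<lambda>a c. a - c)
            + expmod d (margAC d p i j) (\<lambda>a c. c - a) \<ge> real d - 1
    \<and> I_AB M d p + expmod d (margBC d p i j) (\<lambda>b c. b - c)
            + expmod d (margBC d p i j) (\<lambda>b c. c - b) \<ge> real d - 1"
proof -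
  note pd = assms(3) and ns = assms(4) and iM = assms(5) and j = assms(6)
  have M1: "M \<ge> 1" and d1: "d \<ge> 1" using assms(1,2) by auto
  note bg = bound_gen[OF pd ns M1 d1]
  define a0 where "a0 x = expmod d (margAC d p x j) (\<lambda>a c. a - c)" for x
  define a1 where "a1 x = expmod d (margAC d p x j) (\<lambda>a c. a - c - 1)" for x
  define b0 where "b0 y = expmod d (margBC d p y j) (\<lambda>b c. b - c)" for y
  define b1 where "b1 y = expmod d (margBC d p y j) (\<lambda>b c. b - c - 1)" for y
  define e1 where "e1 \<alpha> = expmod d (margAB d p \<alpha> \<alpha>) (\<lambda>a b. a - b)" for \<alpha>
  define e2 where "e2 \<alpha> = (if \<alpha> < M then expmod d (margAB d p (\<alpha>+1) \<alpha>) (\<lambda>a b. b - a)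
       else expmod d (margAB d p 1 M) (\<lambda>a b. b - a - 1))" for \<alpha>
  have I: "I_AB M d p = (\<Sum>\<alpha>=1..M. e1 \<alpha> + e2 \<alpha>)" unfolding I_AB_def e1_def e2_def by simp
  have E1s: "e1 \<alpha> \<ge> (if s then a1 \<alpha> - b1 \<alpha> else a0 \<alpha> - b0 \<alpha>)" if "\<alpha> \<in> {1..M}" for \<alpha> s
    using bg(1)[OF that that j, of 1] bg(1)[OF that that j, of 0]
    unfolding e1_def a0_def a1_def b0_def b1_def by simp
  have E2s: "e2 \<alpha> \<ge> (if s then b1 \<alpha> - a1 (Suc \<alpha>) else b0 \<alpha> - a0 (Suc \<alpha>))" if "\<alpha> \<in> {1..<M}" for \<alpha> s
  proof -
    have x: "Suc \<alpha> \<in> {1..M}" and y: "\<alpha> \<in> {1..M}" using that by auto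
    show ?thesis using that bg(2)[OF x y j, of 1] bg(2)[OF x y j, of 0]
      unfolding e2_def a0_def a1_def b0_def b1_def by simp
  qed
  have h3: "e2 M \<ge> b1 M - a0 1"
  proof -
    have x: "1 \<in> {1..M}" and y: "M \<in> {1..M}" using M1 by auto
    show ?thesis using bg(3)[OF x y j] unfolding e2_def a0_def b1_def by simp
  qed
  have i1: "1 \<le> i" and iM': "i \<le> M" using iM by auto
  have HA1: "\<forall>\<alpha>\<in>{1..M}. e1 \<alpha> \<ge> (if i \<le> \<alpha> then a1 \<alpha> - b1 \<alpha> else a0 \<alpha> - b0 \<alpha>)"
    by (intro ballI, rule E1s)
  have HB1: "\<forall>\<alpha>\<in>{1..M}. e1 \<alpha> \<ge> (if i < \<alpha> then a1 \<alpha> - b1 \<alpha> else a0 \<alpha> - b0 \<alpha>)"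
    by (intro ballI, rule E1s)
  have H2: "\<forall>\<alpha>\<in>{1..<M}. e2 \<alpha> \<ge> (if i \<le> \<alpha> then b1 \<alpha> - a1 (Suc \<alpha>) else b0 \<alpha> - a0 (Suc \<alpha>))"
    by (intro ballI, rule E2s)
  have A: "I_AB M d p \<ge> a1 i - a0 i"
    unfolding I by (rule telesA[OF i1 iM' HA1 H2 h3])
  have B: "I_AB M d p \<ge> b1 i - b0 i"
    unfolding I by (rule telesB[OF i1 iM' HB1 H2 h3])
  have FA: "a1 i + expmod d (margAC d p i j) (\<lambda>a c. c - a) = real d - 1"
    unfolding a1_def by (rule final_AC[OF pd ns M1 d1 iM j])
  have FB: "b1 i + expmod d (margBC d p i j) (\<lambda>b c. c - b) = real d - 1"
    unfolding b1_def by (rule final_BC[OF pd ns M1 d1 iM j])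
  show ?thesis using A B FA FB unfolding a0_def b0_def by linarith
qed
end
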